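(* Let $(\boldsymbol{X},S,L,A,R)$ be a random vector with covariates $\boldsymbol{X}\in\mathcal{X}\subseteq\mathbb{R}^p$, binary sensitive attribute $S\in\{0,1\}$, categorical "legitimate" feature $L$ taking values in a finite set $\mathcal{L}$, treatment $A\in\{1,-1\}$ and outcome $R$, and write $\boldsymbol{Z}=(\boldsymbol{X},S,L)$. Assume $P(S=s\mid L=l)>0$ for all $s\in\{0,1\}$, $l\in\mathcal{L}$, and let $\pi(s\mid l)=P(S=s\mid L=l)$, $\psi_l(S)=\frac{I(S=1)}{\pi(1\mid l)}-\frac{I(S=0)}{\pi(0\mid l)}$, and $\delta_R(\boldsymbol{Z})=E[R\mid\boldsymbol{Z},A=1]-E[R\mid\boldsymbol{Z},A=-1]$. Consider the problem of maximizing the value $\mathcal{V}(\mathcal{D})=E[R(\mathcal{D})]$ over individualized decision rules $\mathcal{D}:\mathcal{Z}\to\{1,-1\}$ subject to the conditional demographic parity constraint $$P[\mathcal{D}(\boldsymbol{Z})=a\mid S=s,L=l]=P[\mathcal{D}(\boldsymbol{Z})=a\mid S=s',L=l]\quad\text{for all } s,s'\in\{0,1\},\ l\in\mathcal{L},\ a\in\{-1,1\}.$$ For each $l\in\mathcal{L}$ let $f_l^*$ be a solution of $$\max_f E\big[I(f(\boldsymbol{Z})>0)\delta_R(\boldsymbol{Z})\big]\quad\text{subject to}\quad E\big[I(f(\boldsymbol{Z})>0)I(L=l)\psi_l(S)\big]=0,$$ and let $\mathcal{D}_l^*=2I(f_l^*(\boldsymbol{Z})>0)-1$. Then the constrained problem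 above has the solution $\mathcal{D}^*_{cdp}(\boldsymbol{Z})=\sum_{l\in\mathcal{L}}\mathcal{D}_l^*(\boldsymbol{Z})I(L=l)$.
   Context: Potential outcomes $R(1),R(-1)$ under treatments $1,-1$; for a rule $\mathcal{D}$, $R(\mathcal{D})=R(1)I(\mathcal{D}(\boldsymbol{Z})=1)+R(-1)I(\mathcal{D}(\boldsymbol{Z})=-1)$. Standing assumptions: (i) stable unit treatment value: $R=R(a)$ when $A=a$; (ii) no unmeasured confounders: $\{R(-1),R(1)\}$ is independent of $A$ given $\boldsymbol{Z}$. Decision rules are parametrized as $\mathcal{D}(\boldsymbol{Z})=2I(f(\boldsymbol{Z})>0)-1$ for a real-valued decision function $f$. *)

theory Defs
  imports "HOL-Probability.Probability"
begin

definition cexp :: "'a measure \<Rightarrow> ('a \<Rightarrow> 'z) \<Rightarrow> 'z measure \<Rightarrow> ('a \<Rightarrow> real) \<Rightarrow> 'a \<Rightarrow> real" where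
  "cexp M Z N g = real_cond_exp M (vimage_algebra (space M) Z N) g"

definition cprob :: "'a measure \<Rightarrow> 'a set \<Rightarrow> 'a set \<Rightarrow> real" where
  "cprob M E C = measure M (E \<inter> C) / measure M C"

definition cond_indep_given ::
  "'a measure \<Rightarrow> ('a \<Rightarrow> 'z) \<Rightarrow> 'z measure \<Rightarrow> ('a \<Rightarrow> 'y) \<Rightarrow> 'y measure \<Rightarrow> ('a \<Rightarrow> 'b) \<Rightarrow> 'b measure \<Rightarrow> bool" where
  "cond_indep_given M Z N Y NY A NA \<longleftrightarrow>
     (\<forall>g h. g \<in> borel_measurable NY \<longrightarrow> h \<in> borel_measurable NA \<longrightarrow>
        (\<exists>B. \<forall>y. \<bar>g y\<bar> \<le> B) \<longrightarrow> (\<exists>B. \<forall>b. \<bar>h b\<bar> \<le> B) \<longrightarrow>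
        (AE \<omega> in M. cexp M Z N (\<lambda>\<omega>. g (Y \<omega>) * h (A \<omega>)) \<omega>
                    = cexp M Z N (\<lambda>\<omega>. g (Y \<omega>)) \<omega> * cexp M Z N (\<lambda>\<omega>. h (A \<omega>)) \<omega>))"

text \<open>delta_R(Z) = E[R | Z, A = 1] - E[R | Z, A = -1], with
  E[R | Z, A = a] = E[R I(A = a) | Z] / P(A = a | Z).\<close>
definition deltaR :: "'a measure \<Rightarrow> ('a \<Rightarrow> 'z) \<Rightarrow> 'z measure \<Rightarrow> ('a \<Rightarrow> int) \<Rightarrow> ('a \<Rightarrow> real) \<Rightarrow> 'a \<Rightarrow> real" where
  "deltaR M Z N A R \<omega> =
     cexp M Z N (\<lambda>\<omega>. R \<omega> * (if A \<omega> = 1 then 1 else 0)) \<omega> / cexp M Z N (\<lambda>\<omega>. if A \<omega> = 1 then 1 else 0) \<omega>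
   - cexp M Z N (\<lambda>\<omega>. R \<omega> * (if A \<omega> = -1 then 1 else 0)) \<omega> / cexp M Z N (\<lambda>\<omega>. if A \<omega> = -1 then 1 else 0) \<omega>"

definition pi_SL :: "'a measure \<Rightarrow> ('a \<Rightarrow> nat) \<Rightarrow> ('a \<Rightarrow> 'l) \<Rightarrow> nat \<Rightarrow> 'l \<Rightarrow> real" where
  "pi_SL M S L s l = cprob M {\<omega> \<in> space M. S \<omega> = s} {\<omega> \<in> space M. L \<omega> = l}"

definition psi :: "'a measure \<Rightarrow> ('a \<Rightarrow> nat) \<Rightarrow> ('a \<Rightarrow> 'l) \<Rightarrow> 'l \<Rightarrow> 'a \<Rightarrow> real" where
  "psi M S L l \<omega> = (if S \<omega> = 1 then 1 / pi_SL M S L 1 l else 0) - (if S \<omega> = 0 then 1 / pi_SL M S L 0 l else 0)"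

text \<open>Value V(D) = E[R(D)] with potential outcomes R(1) = R1, R(-1) = Rm1.\<close>
definition value_fun :: "'a measure \<Rightarrow> ('a \<Rightarrow> 'z) \<Rightarrow> ('a \<Rightarrow> real) \<Rightarrow> ('a \<Rightarrow> real) \<Rightarrow> ('z \<Rightarrow> int) \<Rightarrow> real" where
  "value_fun M Z R1 Rm1 D =
     (\<integral>\<omega>. R1 \<omega> * (if D (Z \<omega>) = 1 then 1 else 0) + Rm1 \<omega> * (if D (Z \<omega>) = -1 then 1 else 0) \<partial>M)"

definition cdp :: "'a measure \<Rightarrow> ('a \<Rightarrow> 'z) \<Rightarrow> ('a \<Rightarrow> nat) \<Rightarrow> ('a \<Rightarrow> 'l) \<Rightarrow> 'l set \<Rightarrow> ('z \<Rightarrow> int) \<Rightarrow> bool" where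
  "cdp M Z S L Ls D \<longleftrightarrow>
     (\<forall>s\<in>{0,1}. \<forall>s'\<in>{0,1}. \<forall>l\<in>Ls. \<forall>a\<in>{-1,1}.
        cprob M {\<omega> \<in> space M. D (Z \<omega>) = a} {\<omega> \<in> space M. S \<omega> = s \<and> L \<omega> = l}
      = cprob M {\<omega> \<in> space M. D (Z \<omega>) = a} {\<omega> \<in> space M. S \<omega> = s' \<and> L \<omega> = l})"

definition obj_l :: "'a measure \<Rightarrow> ('a \<Rightarrow> 'z) \<Rightarrow> ('a \<Rightarrow> real) \<Rightarrow> ('z \<Rightarrow> real) \<Rightarrow> real" where
  "obj_l M Z dR f = (\<integral>\<omega>. (if f (Z \<omega>) > 0 then 1 else 0) * dR \<omega> \<partial>M)"

definition constr_l :: "'a measure \<Rightarrow> ('a \<Rightarrow> 'z) \<Rightarrow> ('a \<Rightarrow> nat) \<Rightarrow> ('a \<Rightarrow> 'l) \<Rightarrow> 'l \<Rightarrow> ('z \<Rightarrow> real) \<Rightarrow> bool" where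
  "constr_l M Z S L l f \<longleftrightarrow>
     (\<integral>\<omega>. (if f (Z \<omega>) > 0 then 1 else 0) * (if L \<omega> = l then 1 else 0) * psi M S L l \<omega> \<partial>M) = 0"

end

theory Submission
  imports Defs
begin


definition tr :: "nat \<Rightarrow> real \<Rightarrow> real" where
  "tr n y = max (- real n) (min (real n) y)"

lemma tr_bound: "\<bar>tr n y\<bar> \<le> \<bar>y\<bar>" "\<bar>tr n y\<bar> \<le> real n"
  unfolding tr_def by auto

lemma tr_lim: "(\<lambda>n. tr n y) \<longlonglongrightarrow> y"
proof (rule tendsto_eventually)
  obtain N :: nat where "\<bar>y\<bar> \<le> real N" using real_arch_simple by blast
  then show "\<forall>\<^sub>F n in sequentially. tr n y = y"
    unfolding eventually_sequentially tr_def
    by (intro exI[of _ N]) auto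
qed

lemma tr_meas[measurable]: "tr n \<in> borel_measurable borel"
  unfolding tr_def by measurable

lemma (in sigma_finite_subalgebra) cexp_prod_trunc:
  assumes finM: "finite_measure M"
  and Y[measurable]: "integrable M Y"
  and I[measurable]: "I \<in> borel_measurable M" and Ib: "\<forall>x\<in>space M. 0 \<le> I x \<and> I x \<le> 1"
  and H: "\<And>n::nat. AE x in M. real_cond_exp M F (\<lambda>x. tr n (Y x) * I x) x
             = real_cond_exp M F (\<lambda>x. tr n (Y x)) x * real_cond_exp M F I x"
  shows "AE x in M. real_cond_exp M F (\<lambda>x. Y x * I x) x = real_cond_exp M F Y x * real_cond_exp M F I x"
proof -
  have Ym[measurable]: "Y \<in> borel_measurable M" using Y by auto
  have intI: "integrable M I"
    by (rule finite_measure.integrable_const_bound[OF finM, of _ 1]) (use Ib in auto)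
  let ?e = "real_cond_exp M F I"
  have e0: "AE x in M. ?e x \<ge> 0" by (rule real_cond_exp_ge_c[OF intI]) (use Ib in auto)
  have e1: "AE x in M. ?e x \<le> 1" by (rule real_cond_exp_le_c[OF intI]) (use Ib in auto)
  define e' where "e' x = max 0 (min 1 (?e x))" for x
  have e'F[measurable]: "e' \<in> borel_measurable F" unfolding e'_def by measurable
  have e'M[measurable]: "e' \<in> borel_measurable M" by (rule measurable_from_subalg[OF subalg e'F])
  have e'b: "\<bar>e' x\<bar> \<le> 1" for x unfolding e'_def by auto
  have ee': "AE x in M. ?e x = e' x" using e0 e1 by eventually_elim (auto simp: e'_def)
  have intCY: "integrable M (real_cond_exp M F Y)" using real_cond_exp_int(1)[OF Y] .
  have intYI: "integrable M (\<lambda>x. Y x * I x)"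
    by (rule Bochner_Integration.integrable_bound[OF Y]) (use Ib in \<open>auto simp: abs_mult intro!: mult_left_le\<close>)
  have intg: "integrable M (\<lambda>x. real_cond_exp M F Y x * ?e x)"
  proof (rule Bochner_Integration.integrable_bound[OF intCY])
    show "AE x in M. norm (real_cond_exp M F Y x * ?e x) \<le> norm (real_cond_exp M F Y x)"
      using e0 e1 by eventually_elim (auto simp: abs_mult intro!: mult_left_le)
  qed measurable
  show ?thesis
  proof (rule real_cond_exp_charact[OF _ intYI intg])
    show "(\<lambda>x. real_cond_exp M F Y x * ?e x) \<in> borel_measurable F" by measurable
    fix A assume AF[measurable]: "A \<in> sets F"
    then have AM[measurable]: "A \<in> sets M" using subalg by (meson subalgebra_def subsetD)
    have iAF[measurable]: "indicator A \<in> borel_measurable F" by measurable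
    define a where "a n = (\<integral>x. indicator A x * (tr n (Y x) * I x) \<partial>M)" for n
    have "a \<longlonglongrightarrow> (\<integral>x. indicator A x * (Y x * I x) \<partial>M)"
      unfolding a_def
    proof (rule integral_dominated_convergence[where w="\<lambda>x. \<bar>Y x\<bar>"])
      show "integrable M (\<lambda>x. \<bar>Y x\<bar>)" using Y by auto
      show "AE x in M. (\<lambda>n. indicator A x * (tr n (Y x) * I x)) \<longlonglongrightarrow> indicator A x * (Y x * I x)"
        by (intro AE_I2 tendsto_intros tr_lim)
      show "AE x in M. norm (indicator A x * (tr n (Y x) * I x)) \<le> \<bar>Y x\<bar>" for n
      proof (intro AE_I2)
        fix x assume "x \<in> space M"
        then have "\<bar>I x\<bar> \<le> 1" using Ib by auto
        then show "norm (indicator A x * (tr n (Y x) * I x)) \<le> \<bar>Y x\<bar>"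
          using tr_bound(1)[of n "Y x"]
          by (auto simp: indicator_def abs_mult intro: order_trans[OF mult_left_le])
      qed
    qed measurable
    moreover have "a n = (\<integral>x. (indicator A x * e' x) * tr n (Y x) \<partial>M)" for n
    proof -
      have inti: "integrable M (\<lambda>x. indicator A x * (tr n (Y x) * I x))"
      proof (rule finite_measure.integrable_const_bound[OF finM, of _ "real n"])
        show "AE x in M. norm (indicator A x * (tr n (Y x) * I x)) \<le> real n"
        proof (rule AE_I2)
          fix x assume "x \<in> space M"
          then have "\<bar>I x\<bar> \<le> 1" using Ib by auto
          then show "norm (indicator A x * (tr n (Y x) * I x)) \<le> real n"
            using tr_bound(2)[of n "Y x"]
            by (auto simp: indicator_def abs_mult intro: order_trans[OF mult_right_le_one_le])
        qed
      qed measurable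
      have "a n = (\<integral>x. indicator A x * real_cond_exp M F (\<lambda>x. tr n (Y x) * I x) x \<partial>M)"
        unfolding a_def by (rule real_cond_exp_intg(2)[symmetric]) (use inti in auto)
      also have "\<dots> = (\<integral>x. (indicator A x * e' x) * real_cond_exp M F (\<lambda>x. tr n (Y x)) x \<partial>M)"
      proof (rule integral_cong_AE)
        show "AE x in M. indicator A x * real_cond_exp M F (\<lambda>x. tr n (Y x) * I x) x =
            indicator A x * e' x * real_cond_exp M F (\<lambda>x. tr n (Y x)) x"
          using H[of n] ee' by eventually_elim auto
      qed measurable
      also have "\<dots> = (\<integral>x. (indicator A x * e' x) * tr n (Y x) \<partial>M)"
      proof (rule real_cond_exp_intg(2))
        show "integrable M (\<lambda>x. indicator A x * e' x * tr n (Y x))"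
        proof (rule finite_measure.integrable_const_bound[OF finM, of _ "real n"])
          show "AE x in M. norm (indicator A x * e' x * tr n (Y x)) \<le> real n"
          proof (rule AE_I2)
            fix x
            show "norm (indicator A x * e' x * tr n (Y x)) \<le> real n"
              using tr_bound(2)[of n "Y x"] e'b[of x]
              by (auto simp: indicator_def abs_mult intro: order_trans[OF mult_left_le_one_le])
          qed
        qed measurable
      qed measurable
      finally show ?thesis .
    qed
    then have "a = (\<lambda>n. \<integral>x. (indicator A x * e' x) * tr n (Y x) \<partial>M)" by auto
    moreover have "(\<lambda>n. \<integral>x. (indicator A x * e' x) * tr n (Y x) \<partial>M) \<longlonglongrightarrow> (\<integral>x. (indicator A x * e' x) * Y x \<partial>M)"
    proof (rule integral_dominated_convergence[where w="\<lambda>x. \<bar>Y x\<bar>"])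
      show "integrable M (\<lambda>x. \<bar>Y x\<bar>)" using Y by auto
      show "AE x in M. (\<lambda>n. (indicator A x * e' x) * tr n (Y x)) \<longlonglongrightarrow> (indicator A x * e' x) * Y x"
        by (intro AE_I2 tendsto_intros tr_lim)
      show "AE x in M. norm ((indicator A x * e' x) * tr n (Y x)) \<le> \<bar>Y x\<bar>" for n
      proof (rule AE_I2)
        fix x
        show "norm ((indicator A x * e' x) * tr n (Y x)) \<le> \<bar>Y x\<bar>"
          using tr_bound(1)[of n "Y x"] e'b[of x]
          by (auto simp: indicator_def abs_mult intro: order_trans[OF mult_left_le_one_le])
      qed
    qed measurable
    ultimately have "(\<integral>x. indicator A x * (Y x * I x) \<partial>M) = (\<integral>x. (indicator A x * e' x) * Y x \<partial>M)"
      using LIMSEQ_unique by metis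
    also have "\<dots> = (\<integral>x. (indicator A x * e' x) * real_cond_exp M F Y x \<partial>M)"
    proof (rule real_cond_exp_intg(2)[symmetric])
      show "integrable M (\<lambda>x. indicator A x * e' x * Y x)"
      proof (rule Bochner_Integration.integrable_bound[OF Y])
        show "AE x in M. norm (indicator A x * e' x * Y x) \<le> norm (Y x)"
        proof (rule AE_I2)
          fix x
          show "norm (indicator A x * e' x * Y x) \<le> norm (Y x)"
            using e'b[of x] by (auto simp: indicator_def abs_mult intro: mult_left_le_one_le)
        qed
      qed measurable
    qed measurable
    also have "\<dots> = (\<integral>x. indicator A x * (real_cond_exp M F Y x * ?e x) \<partial>M)"
    proof (rule integral_cong_AE)
      show "AE x in M. indicator A x * e' x * real_cond_exp M F Y x =
            indicator A x * (real_cond_exp M F Y x * ?e x)"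
        using ee' by eventually_elim auto
    qed measurable
    finally show "(\<integral>x\<in>A. Y x * I x \<partial>M) = (\<integral>x\<in>A. real_cond_exp M F Y x * ?e x \<partial>M)"
      by (simp add: set_lebesgue_integral_def)
  qed
qed



lemma constr_iff:
  assumes P: "prob_space M" and Sm[measurable]: "S \<in> measurable M (count_space UNIV)"
    and Lm[measurable]: "L \<in> measurable M (count_space UNIV)"
    and Sv: "\<forall>\<omega>\<in>space M. S \<omega> \<in> {0,1}"
    and p0: "pi_SL M S L 0 l > 0" and p1: "pi_SL M S L 1 l > 0" and E[measurable]: "E \<in> sets M"
  shows "(\<integral>\<omega>. (if \<omega> \<in> E then 1 else 0) * (if L \<omega> = l then 1 else 0) * psi M S L l \<omega> \<partial>M) = 0
     \<longleftrightarrow> cprob M E {\<omega>\<in>space M. S \<omega> = 1 \<and> L \<omega> = l} = cprob M E {\<omega>\<in>space M. S \<omega> = 0 \<and> L \<omega> = l}"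
proof -
  interpret prob_space M by (rule P)
  define C where "C s = {\<omega>\<in>space M. S \<omega> = s \<and> L \<omega> = l}" for s
  define B where "B = {\<omega>\<in>space M. L \<omega> = l}"
  have CM[measurable]: "C s \<in> sets M" for s unfolding C_def by measurable
  have BM[measurable]: "B \<in> sets M" unfolding B_def by measurable
  have pis: "pi_SL M S L s l = measure M (C s) / measure M B" for s
    unfolding pi_SL_def cprob_def C_def B_def by (rule arg_cong2[where f="(/)"]) (auto intro: arg_cong[where f="measure M"])
  have mB: "measure M B > 0"
    using p0 pis[of 0] by (metis division_ring_divide_zero less_irrefl measure_nonneg order_le_less)
  have mC: "measure M (C s) > 0" if "pi_SL M S L s l > 0" for s
    using that pis[of s] by (metis div_0 less_irrefl measure_nonneg order_le_less)
  have mC0: "measure M (C 0) > 0" and mC1: "measure M (C 1) > 0" using mC p0 p1 by auto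
  define p where "p s = pi_SL M S L s l" for s
  have "(\<integral>\<omega>. (if \<omega> \<in> E then 1 else 0) * (if L \<omega> = l then 1 else 0) * psi M S L l \<omega> \<partial>M)
     = (\<integral>\<omega>. indicator (E \<inter> C 1) \<omega> / p 1 - indicator (E \<inter> C 0) \<omega> / p 0 \<partial>M)"
  proof (rule Bochner_Integration.integral_cong[OF refl])
    fix \<omega> assume "\<omega> \<in> space M"
    then show "(if \<omega> \<in> E then 1 else 0) * (if L \<omega> = l then 1 else 0) * psi M S L l \<omega>
        = indicator (E \<inter> C 1) \<omega> / p 1 - indicator (E \<inter> C 0) \<omega> / p 0"
      using Sv unfolding psi_def C_def p_def by (auto simp: indicator_def)
  qed
  also have "\<dots> = measure M (E \<inter> C 1) / p 1 - measure M (E \<inter> C 0) / p 0"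
    by (subst Bochner_Integration.integral_diff) (auto simp: measure_def integrable_indicator_iff less_top[symmetric] intro!: integrable_divide_zero)
  also have "\<dots> = measure M B * (cprob M E (C 1) - cprob M E (C 0))"
    unfolding p_def pis cprob_def using mB mC0 mC1 by (simp add: field_simps)
  finally show ?thesis using mB unfolding C_def by simp
qed



lemma pos_C:
  assumes P: "prob_space M" and p: "pi_SL M S L t l > 0"
  shows "measure M {\<omega>\<in>space M. S \<omega> = t \<and> L \<omega> = l} > 0"
proof -
  have "{\<omega>\<in>space M. S \<omega> = t} \<inter> {\<omega>\<in>space M. L \<omega> = l} = {\<omega>\<in>space M. S \<omega> = t \<and> L \<omega> = l}" by auto
  then have "pi_SL M S L t l = measure M {\<omega>\<in>space M. S \<omega> = t \<and> L \<omega> = l} / measure M {\<omega>\<in>space M. L \<omega> = l}"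
    unfolding pi_SL_def cprob_def by simp
  moreover have "measure M {\<omega>\<in>space M. S \<omega> = t \<and> L \<omega> = l} \<ge> 0" by (rule measure_nonneg)
  ultimately show ?thesis using p by (cases "measure M {\<omega>\<in>space M. S \<omega> = t \<and> L \<omega> = l} = 0") (auto simp del: measure_nonneg)
qed

theorem proposition1:
  fixes M :: "'a measure"
    and X :: "'a \<Rightarrow> real ^ 'p"
    and S :: "'a \<Rightarrow> nat"
    and L :: "'a \<Rightarrow> 'l"
    and Ls :: "'l set"
    and A :: "'a \<Rightarrow> int"
    and R R1 Rm1 :: "'a \<Rightarrow> real"
    and fs :: "'l \<Rightarrow> ((real ^ 'p) \<times> nat \<times> 'l) \<Rightarrow> real"
  defines "NZ \<equiv> (borel :: (real ^ 'p) measure) \<Otimes>\<^sub>M ((count_space UNIV :: nat measure) \<Otimes>\<^sub>M (count_space UNIV :: 'l measure))"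
    and "Z \<equiv> (\<lambda>\<omega>. (X \<omega>, S \<omega>, L \<omega>))"
    and "Dstar \<equiv> (\<lambda>z. \<Sum>l\<in>Ls. (2 * (if fs l z > 0 then 1 else 0) - 1) * (if snd (snd z) = l then 1 else (0::int)))"
  assumes prob: "prob_space M"
    and X_meas: "X \<in> borel_measurable M"
    and S_meas: "S \<in> measurable M (count_space UNIV)"
    and L_meas: "L \<in> measurable M (count_space UNIV)"
    and A_meas: "A \<in> measurable M (count_space UNIV)"
    and R1_int: "integrable M R1"
    and Rm1_int: "integrable M Rm1"
    and S_vals: "\<forall>\<omega>\<in>space M. S \<omega> \<in> {0, 1}"
    and Ls_fin: "finite Ls"
    and L_vals: "\<forall>\<omega>\<in>space M. L \<omega> \<in> Ls"
    and A_vals: "\<forall>\<omega>\<in>space M. A \<omega> \<in> {1, -1}"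
    and SUTVA: "\<forall>\<omega>\<in>space M. R \<omega> = (if A \<omega> = 1 then R1 \<omega> else Rm1 \<omega>)"
    and NUC: "cond_indep_given M Z NZ (\<lambda>\<omega>. (Rm1 \<omega>, R1 \<omega>)) borel A (count_space UNIV)"
    and propensity: "AE \<omega> in M. 0 < cexp M Z NZ (\<lambda>\<omega>. if A \<omega> = 1 then 1 else 0) \<omega>
                          \<and> cexp M Z NZ (\<lambda>\<omega>. if A \<omega> = 1 then 1 else 0) \<omega> < 1"
    and pos_SL: "\<forall>s\<in>{0,1}. \<forall>l\<in>Ls. pi_SL M S L s l > 0"
    and fs_meas: "\<forall>l\<in>Ls. fs l \<in> borel_measurable NZ"
    and fs_feas: "\<forall>l\<in>Ls. constr_l M Z S L l (fs l)"
    and fs_opt: "\<forall>l\<in>Ls. \<forall>f \<in> borel_measurable NZ. constr_l M Z S L l f \<longrightarrow>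
                    obj_l M Z (deltaR M Z NZ A R) f \<le> obj_l M Z (deltaR M Z NZ A R) (fs l)"
  shows "Dstar \<in> measurable NZ (count_space UNIV)
    \<and> (\<forall>\<omega>\<in>space M. Dstar (Z \<omega>) \<in> {1, -1})
    \<and> cdp M Z S L Ls Dstar
    \<and> (\<forall>D \<in> measurable NZ (count_space UNIV). (\<forall>z\<in>space NZ. D z \<in> {1, -1}) \<longrightarrow> cdp M Z S L Ls D \<longrightarrow>
          value_fun M Z R1 Rm1 D \<le> value_fun M Z R1 Rm1 Dstar)"
  proof -
  interpret prob_space M by (rule prob)
  have Zm[measurable]: "Z \<in> measurable M NZ" unfolding Z_def NZ_def using X_meas S_meas L_meas by measurable
  have spNZ: "space NZ = UNIV" unfolding NZ_def by (simp add: space_pair_measure)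
  define F where "F = vimage_algebra (space M) Z NZ"
  have subalg: "subalgebra M F"
    unfolding subalgebra_def F_def
    using sets_vimage_algebra2[of Z "space M" NZ] measurable_sets[OF Zm] spNZ by auto
  interpret finite_measure_subalgebra M F by unfold_locales (rule subalg)
  have ZF[measurable]: "Z \<in> measurable F NZ" unfolding F_def by (rule measurable_vimage_algebra1) (simp add: spNZ)
  have cexp_eq: "cexp M Z NZ g = real_cond_exp M F g" for g unfolding cexp_def F_def ..
  have LF[measurable]: "L \<in> measurable F (count_space UNIV)"
  proof -
    have "(\<lambda>z. snd (snd z)) \<in> measurable NZ (count_space UNIV)" unfolding NZ_def by measurable
    from measurable_compose[OF ZF this] show ?thesis by (simp add: Z_def)
  qed
  have Rm[measurable]: "R \<in> borel_measurable M"
    using SUTVA by (subst measurable_cong[where g="\<lambda>\<omega>. if A \<omega> = 1 then R1 \<omega> else Rm1 \<omega>"]) (use A_meas R1_int Rm1_int in auto)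
  have finM: "finite_measure M" by (rule finite_measure_axioms)
  have I1b: "\<forall>x\<in>space M. 0 \<le> (if A x = 1 then 1 else 0::real) \<and> (if A x = 1 then 1 else 0::real) \<le> 1" by auto
  have Imb: "\<forall>x\<in>space M. 0 \<le> (if A x = -1 then 1 else 0::real) \<and> (if A x = -1 then 1 else 0::real) \<le> 1" by auto
  have intI1: "integrable M (\<lambda>x. if A x = 1 then 1 else 0::real)"
    by (rule integrable_const_bound[of _ 1]) (use A_meas in auto)
  have nuc1: "AE x in M. real_cond_exp M F (\<lambda>x. tr n (R1 x) * (if A x = 1 then 1 else 0)) x
     = real_cond_exp M F (\<lambda>x. tr n (R1 x)) x * real_cond_exp M F (\<lambda>x. if A x = 1 then 1 else 0) x" for n
  proof -
    have g: "(\<lambda>y::real\<times>real. tr n (snd y)) \<in> borel_measurable borel"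
      unfolding tr_def by (intro borel_measurable_continuous_onI continuous_intros)
    have h: "(\<lambda>b::int. if b = 1 then 1 else 0::real) \<in> borel_measurable (count_space UNIV)" by simp
    have gb: "\<exists>B. \<forall>y::real\<times>real. \<bar>tr n (snd y)\<bar> \<le> B" using tr_bound(2) by blast
    have hb: "\<exists>B. \<forall>b::int. \<bar>if b = 1 then 1 else 0::real\<bar> \<le> B" by (intro exI[of _ 1]) auto
    show ?thesis using NUC[unfolded cond_indep_given_def cexp_eq, rule_format, OF g h gb hb] by simp
  qed
  have nucm: "AE x in M. real_cond_exp M F (\<lambda>x. tr n (Rm1 x) * (if A x = -1 then 1 else 0)) x
     = real_cond_exp M F (\<lambda>x. tr n (Rm1 x)) x * real_cond_exp M F (\<lambda>x. if A x = -1 then 1 else 0) x" for n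
  proof -
    have g: "(\<lambda>y::real\<times>real. tr n (fst y)) \<in> borel_measurable borel"
      unfolding tr_def by (intro borel_measurable_continuous_onI continuous_intros)
    have h: "(\<lambda>b::int. if b = -1 then 1 else 0::real) \<in> borel_measurable (count_space UNIV)" by simp
    have gb: "\<exists>B. \<forall>y::real\<times>real. \<bar>tr n (fst y)\<bar> \<le> B" using tr_bound(2) by blast
    have hb: "\<exists>B. \<forall>b::int. \<bar>if b = -1 then 1 else 0::real\<bar> \<le> B" by (intro exI[of _ 1]) auto
    show ?thesis using NUC[unfolded cond_indep_given_def cexp_eq, rule_format, OF g h gb hb] by simp
  qed
  have ce1: "AE x in M. real_cond_exp M F (\<lambda>x. R1 x * (if A x = 1 then 1 else 0)) x
     = real_cond_exp M F R1 x * real_cond_exp M F (\<lambda>x. if A x = 1 then 1 else 0) x"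
    by (rule cexp_prod_trunc[OF finM R1_int _ I1b nuc1]) (use A_meas in simp)
  have cem: "AE x in M. real_cond_exp M F (\<lambda>x. Rm1 x * (if A x = -1 then 1 else 0)) x
     = real_cond_exp M F Rm1 x * real_cond_exp M F (\<lambda>x. if A x = -1 then 1 else 0) x"
    by (rule cexp_prod_trunc[OF finM Rm1_int _ Imb nucm]) (use A_meas in simp)
  have ce1': "AE x in M. real_cond_exp M F (\<lambda>x. R x * (if A x = 1 then 1 else 0)) x
     = real_cond_exp M F (\<lambda>x. R1 x * (if A x = 1 then 1 else 0)) x"
    by (rule real_cond_exp_cong) (use SUTVA A_meas R1_int in \<open>auto intro!: AE_I2\<close>)
  have cem': "AE x in M. real_cond_exp M F (\<lambda>x. R x * (if A x = -1 then 1 else 0)) x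
     = real_cond_exp M F (\<lambda>x. Rm1 x * (if A x = -1 then 1 else 0)) x"
    by (rule real_cond_exp_cong) (use SUTVA A_meas Rm1_int A_vals in \<open>auto intro!: AE_I2\<close>)
  have eIm: "AE x in M. real_cond_exp M F (\<lambda>x. if A x = -1 then 1 else 0) x
     = 1 - real_cond_exp M F (\<lambda>x. if A x = 1 then 1 else 0) x"
  proof -
    have a: "AE x in M. real_cond_exp M F (\<lambda>x. if A x = -1 then 1 else 0) x
        = real_cond_exp M F (\<lambda>x. 1 - (if A x = 1 then 1 else 0)) x"
      by (rule real_cond_exp_cong) (use A_vals A_meas in \<open>auto intro!: AE_I2\<close>)
    have b: "AE x in M. real_cond_exp M F (\<lambda>x. 1 - (if A x = 1 then 1 else 0)) x
        = real_cond_exp M F (\<lambda>x. 1) x - real_cond_exp M F (\<lambda>x. if A x = 1 then 1 else 0) x"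
      by (rule real_cond_exp_diff[OF _ intI1]) simp
    have c: "AE x in M. real_cond_exp M F (\<lambda>x. 1) x = 1"
      by (rule real_cond_exp_F_meas) auto
    from a b c show ?thesis by eventually_elim simp
  qed
  define c where "c x = real_cond_exp M F R1 x - real_cond_exp M F Rm1 x" for x
  have dR_ae: "AE x in M. deltaR M Z NZ A R x = c x"
    using ce1 cem ce1' cem' eIm propensity unfolding cexp_eq
    by eventually_elim (auto simp: deltaR_def cexp_eq c_def)
  have dRm[measurable]: "deltaR M Z NZ A R \<in> borel_measurable M"
    unfolding deltaR_def cexp_eq by measurable
  have cF[measurable]: "c \<in> borel_measurable F" unfolding c_def by measurable
  have key: "integrable M (\<lambda>x. \<phi> x * deltaR M Z NZ A R x) \<and>
      (\<integral>x. \<phi> x * deltaR M Z NZ A R x \<partial>M) = (\<integral>x. \<phi> x * R1 x \<partial>M) - (\<integral>x. \<phi> x * Rm1 x \<partial>M)"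
    if phF[measurable]: "\<phi> \<in> borel_measurable F" and phb: "\<And>x. x \<in> space M \<Longrightarrow> \<bar>\<phi> x\<bar> \<le> 1" for \<phi>
  proof -
    have phM[measurable]: "\<phi> \<in> borel_measurable M" by (rule measurable_from_subalg[OF subalg phF])
    have i1: "integrable M (\<lambda>x. \<phi> x * R1 x)"
    proof (rule Bochner_Integration.integrable_bound[OF R1_int])
      show "AE x in M. norm (\<phi> x * R1 x) \<le> norm (R1 x)"
        using phb by (intro AE_I2) (auto simp: abs_mult intro: mult_left_le_one_le)
    qed (use R1_int in measurable)
    have im: "integrable M (\<lambda>x. \<phi> x * Rm1 x)"
    proof (rule Bochner_Integration.integrable_bound[OF Rm1_int])
      show "AE x in M. norm (\<phi> x * Rm1 x) \<le> norm (Rm1 x)"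
        using phb by (intro AE_I2) (auto simp: abs_mult intro: mult_left_le_one_le)
    qed (use Rm1_int in measurable)
    note r1 = real_cond_exp_intg[OF i1 phF borel_measurable_integrable[OF R1_int]]
    note rm = real_cond_exp_intg[OF im phF borel_measurable_integrable[OF Rm1_int]]
    have ae: "AE x in M. \<phi> x * deltaR M Z NZ A R x = \<phi> x * real_cond_exp M F R1 x - \<phi> x * real_cond_exp M F Rm1 x"
      using dR_ae by eventually_elim (simp add: c_def right_diff_distrib)
    have "integrable M (\<lambda>x. \<phi> x * real_cond_exp M F R1 x - \<phi> x * real_cond_exp M F Rm1 x)"
      using r1(1) rm(1) by auto
    then have int: "integrable M (\<lambda>x. \<phi> x * deltaR M Z NZ A R x)"
      using integrable_cong_AE[OF _ _ ae] by simp
    have "(\<integral>x. \<phi> x * deltaR M Z NZ A R x \<partial>M) = (\<integral>x. \<phi> x * real_cond_exp M F R1 x - \<phi> x * real_cond_exp M F Rm1 x \<partial>M)"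
      by (rule integral_cong_AE[OF _ _ ae]) simp_all
    also have "\<dots> = (\<integral>x. \<phi> x * R1 x \<partial>M) - (\<integral>x. \<phi> x * Rm1 x \<partial>M)"
      using r1 rm by simp
    finally show ?thesis using int by simp
  qed
  have Dval: "Dstar (Z \<omega>) = (if fs (L \<omega>) (Z \<omega>) > 0 then 1 else -1)" if "\<omega> \<in> space M" for \<omega>
  proof -
    have "Dstar (Z \<omega>) = (\<Sum>l\<in>Ls. if L \<omega> = l then (if fs l (Z \<omega>) > 0 then 1 else -1) else 0)"
      unfolding Dstar_def by (rule sum.cong) (auto simp: Z_def)
    also have "\<dots> = (if fs (L \<omega>) (Z \<omega>) > 0 then 1 else -1)"
      by (subst sum.delta'[OF Ls_fin]) (use L_vals that in auto)
    finally show ?thesis .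
  qed
  have sndF[measurable]: "(\<lambda>z. snd (snd z)) \<in> measurable NZ (count_space UNIV)" unfolding NZ_def by measurable
  have DstarR: "(\<lambda>z. real_of_int (Dstar z)) = (\<lambda>z. \<Sum>l\<in>Ls. (if snd (snd z) = l then (if fs l z > 0 then 1 else -1) else 0 :: real))"
    unfolding Dstar_def of_int_sum by (intro ext sum.cong) auto
  have DstarB: "(\<lambda>z. real_of_int (Dstar z)) \<in> borel_measurable NZ"
    unfolding DstarR
  proof (rule borel_measurable_sum)
    fix l assume "l \<in> Ls"
    then have [measurable]: "fs l \<in> borel_measurable NZ" using fs_meas by auto
    show "(\<lambda>z. (if snd (snd z) = l then (if fs l z > 0 then 1 else -1) else 0 :: real)) \<in> borel_measurable NZ"
      by measurable
  qed
  have "(\<lambda>z. \<lfloor>real_of_int (Dstar z)\<rfloor>) \<in> measurable NZ (count_space UNIV)"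
    using measurable_compose[OF DstarB measurable_real_floor] by simp
  then have DstarM: "Dstar \<in> measurable NZ (count_space UNIV)" by simp
  have cdpS: "cdp M Z S L Ls Dstar"
    unfolding cdp_def
  proof (intro ballI)
    fix s s' l a assume s: "s \<in> {0,1::nat}" and s': "s' \<in> {0,1::nat}" and l: "l \<in> Ls" and a: "a \<in> {-1,1::int}"
    have [measurable]: "fs l \<in> borel_measurable NZ" using fs_meas l by auto
    define E where "E = {\<omega>\<in>space M. fs l (Z \<omega>) > 0}"
    have EM[measurable]: "E \<in> sets M" unfolding E_def by measurable
    define C where "C t = {\<omega>\<in>space M. S \<omega> = t \<and> L \<omega> = l}" for t
    have CM[measurable]: "C t \<in> sets M" for t unfolding C_def using S_meas L_meas by measurable
    have feas: "cprob M E (C 1) = cprob M E (C 0)"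
    proof -
      have "(\<integral>\<omega>. (if \<omega> \<in> E then 1 else 0) * (if L \<omega> = l then 1 else 0) * psi M S L l \<omega> \<partial>M)
          = (\<integral>\<omega>. (if fs l (Z \<omega>) > 0 then 1 else 0) * (if L \<omega> = l then 1 else 0) * psi M S L l \<omega> \<partial>M)"
        by (rule Bochner_Integration.integral_cong[OF refl]) (simp add: E_def)
      also have "\<dots> = 0" using fs_feas l unfolding constr_l_def by simp
      finally show ?thesis unfolding C_def
        using constr_iff[OF prob S_meas L_meas S_vals _ _ EM, of l] pos_SL l by auto
    qed
    have mC: "measure M (C t) > 0" if "t \<in> {0,1}" for t
      unfolding C_def using pos_C[OF prob, of S L t l] pos_SL l that by auto
    have gen: "cprob M {\<omega>\<in>space M. Dstar (Z \<omega>) = a} (C t) = (if a = 1 then cprob M E (C 1) else 1 - cprob M E (C 1))"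
      if t: "t \<in> {0,1}" for t
    proof -
      have ct: "cprob M E (C t) = cprob M E (C 1)" using t feas by auto
      have setq: "{\<omega>\<in>space M. Dstar (Z \<omega>) = a} \<inter> C t = (if a = 1 then E \<inter> C t else C t - E)"
      proof (cases "a = 1")
        case True
        then show ?thesis using Dval by (auto simp: C_def E_def split: if_splits)
      next
        case False
        then have "a = -1" using a by auto
        then show ?thesis using Dval by (auto simp: C_def E_def split: if_splits)
      qed
      show ?thesis
      proof (cases "a = 1")
        case True
        then show ?thesis using setq ct by (simp add: cprob_def)
      next
        case False
        have "cprob M {\<omega>\<in>space M. Dstar (Z \<omega>) = a} (C t) = measure M (C t - E) / measure M (C t)"
          using setq False by (simp add: cprob_def)
        also have "\<dots> = (measure M (C t) - measure M (C t \<inter> E)) / measure M (C t)"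
          by (simp add: finite_measure_Diff')
        also have "\<dots> = 1 - cprob M E (C t)"
          using mC[OF t] by (simp add: cprob_def field_simps Int_commute)
        finally show ?thesis using False ct by simp
      qed
    qed
    show "cprob M {\<omega> \<in> space M. Dstar (Z \<omega>) = a} {\<omega> \<in> space M. S \<omega> = s \<and> L \<omega> = l}
        = cprob M {\<omega> \<in> space M. Dstar (Z \<omega>) = a} {\<omega> \<in> space M. S \<omega> = s' \<and> L \<omega> = l}"
      using gen[OF s] gen[OF s'] unfolding C_def by simp
  qed
  define dR where "dR = deltaR M Z NZ A R"
  have vf: "value_fun M Z R1 Rm1 Dx = (\<integral>\<omega>. Rm1 \<omega> \<partial>M) + (\<integral>\<omega>. (if Dx (Z \<omega>) = 1 then 1 else 0) * dR \<omega> \<partial>M)"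
    if Dxv: "\<forall>\<omega>\<in>space M. Dx (Z \<omega>) \<in> {1,-1}" and DxF: "(\<lambda>\<omega>. if Dx (Z \<omega>) = 1 then 1 else 0::real) \<in> borel_measurable F" for Dx
  proof -
    have DxM[measurable]: "(\<lambda>\<omega>. if Dx (Z \<omega>) = 1 then 1 else 0::real) \<in> borel_measurable M"
      by (rule measurable_from_subalg[OF subalg DxF])
    have k: "(\<integral>x. (if Dx (Z x) = 1 then 1 else 0) * dR x \<partial>M)
        = (\<integral>x. (if Dx (Z x) = 1 then 1 else 0) * R1 x \<partial>M) - (\<integral>x. (if Dx (Z x) = 1 then 1 else 0) * Rm1 x \<partial>M)"
      using key[OF DxF] unfolding dR_def by simp
    have i1: "integrable M (\<lambda>x. (if Dx (Z x) = 1 then 1 else 0) * R1 x)"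
    proof (rule Bochner_Integration.integrable_bound[OF R1_int])
      show "AE x in M. norm ((if Dx (Z x) = 1 then 1 else 0) * R1 x) \<le> norm (R1 x)" by (intro AE_I2) auto
    qed (use R1_int in measurable)
    have im: "integrable M (\<lambda>x. (if Dx (Z x) = 1 then 1 else 0) * Rm1 x)"
    proof (rule Bochner_Integration.integrable_bound[OF Rm1_int])
      show "AE x in M. norm ((if Dx (Z x) = 1 then 1 else 0) * Rm1 x) \<le> norm (Rm1 x)" by (intro AE_I2) auto
    qed (use Rm1_int in measurable)
    have "value_fun M Z R1 Rm1 Dx = (\<integral>\<omega>. Rm1 \<omega> + ((if Dx (Z \<omega>) = 1 then 1 else 0) * R1 \<omega> - (if Dx (Z \<omega>) = 1 then 1 else 0) * Rm1 \<omega>) \<partial>M)"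
      unfolding value_fun_def by (rule Bochner_Integration.integral_cong[OF refl]) (use Dxv in auto)
    also have "\<dots> = (\<integral>\<omega>. Rm1 \<omega> \<partial>M) + ((\<integral>x. (if Dx (Z x) = 1 then 1 else 0) * R1 x \<partial>M) - (\<integral>x. (if Dx (Z x) = 1 then 1 else 0) * Rm1 x \<partial>M))"
      using i1 im Rm1_int by simp
    finally show ?thesis using k by simp
  qed
  have keyR: "integrable M (\<lambda>x. \<phi> x * dR x)"
    if "\<phi> \<in> borel_measurable F" "\<And>x. x \<in> space M \<Longrightarrow> \<bar>\<phi> x\<bar> \<le> 1" for \<phi>
    using key[OF that] unfolding dR_def by simp
  have dRM[measurable]: "dR \<in> borel_measurable M" unfolding dR_def by measurable
  have splitL: "(\<integral>\<omega>. \<psi> \<omega> * dR \<omega> \<partial>M) = (\<Sum>l\<in>Ls. \<integral>\<omega>. ((if L \<omega> = l then 1 else 0) * \<psi> \<omega>) * dR \<omega> \<partial>M)"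
    if psF[measurable]: "\<psi> \<in> borel_measurable F" and psb: "\<And>x. x \<in> space M \<Longrightarrow> \<bar>\<psi> x\<bar> \<le> 1" for \<psi>
  proof -
    have "(\<integral>\<omega>. \<psi> \<omega> * dR \<omega> \<partial>M) = (\<integral>\<omega>. (\<Sum>l\<in>Ls. ((if L \<omega> = l then 1 else 0) * \<psi> \<omega>) * dR \<omega>) \<partial>M)"
    proof (rule Bochner_Integration.integral_cong[OF refl])
      fix \<omega> assume "\<omega> \<in> space M"
      then have "L \<omega> \<in> Ls" using L_vals by auto
      have "(\<Sum>l\<in>Ls. ((if L \<omega> = l then 1 else 0) * \<psi> \<omega>) * dR \<omega>) = (\<Sum>l\<in>Ls. if L \<omega> = l then \<psi> \<omega> * dR \<omega> else 0)"
        by (rule sum.cong) auto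
      also have "\<dots> = \<psi> \<omega> * dR \<omega>" using \<open>L \<omega> \<in> Ls\<close> by (subst sum.delta'[OF Ls_fin]) simp
      finally show "\<psi> \<omega> * dR \<omega> = (\<Sum>l\<in>Ls. ((if L \<omega> = l then 1 else 0) * \<psi> \<omega>) * dR \<omega>)" by simp
    qed
    also have "\<dots> = (\<Sum>l\<in>Ls. \<integral>\<omega>. ((if L \<omega> = l then 1 else 0) * \<psi> \<omega>) * dR \<omega> \<partial>M)"
    proof (rule Bochner_Integration.integral_sum)
      fix l assume "l \<in> Ls"
      show "integrable M (\<lambda>\<omega>. ((if L \<omega> = l then 1 else 0) * \<psi> \<omega>) * dR \<omega>)"
        by (rule keyR) (use psb in \<open>auto simp: abs_mult\<close>)
    qed
    finally show ?thesis .
  qed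
  have opt: "value_fun M Z R1 Rm1 D \<le> value_fun M Z R1 Rm1 Dstar"
    if Dm[measurable]: "D \<in> measurable NZ (count_space UNIV)" and Dv: "\<forall>z\<in>space NZ. D z \<in> {1, -1}"
      and cdpD: "cdp M Z S L Ls D" for D
  proof -
    have DZ[measurable]: "(\<lambda>\<omega>. D (Z \<omega>)) \<in> measurable F (count_space UNIV)" by measurable
    have DsZ[measurable]: "(\<lambda>\<omega>. Dstar (Z \<omega>)) \<in> measurable F (count_space UNIV)"
      using measurable_compose[OF ZF DstarM] .
    have IDF[measurable]: "(\<lambda>\<omega>. if D (Z \<omega>) = 1 then 1 else 0::real) \<in> borel_measurable F" by measurable
    have IDsF[measurable]: "(\<lambda>\<omega>. if Dstar (Z \<omega>) = 1 then 1 else 0::real) \<in> borel_measurable F" by measurable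
    have v1: "value_fun M Z R1 Rm1 D = (\<integral>\<omega>. Rm1 \<omega> \<partial>M) + (\<integral>\<omega>. (if D (Z \<omega>) = 1 then 1 else 0) * dR \<omega> \<partial>M)"
      by (rule vf[OF _ IDF]) (use Dv[unfolded spNZ] in \<open>simp only: UNIV_I ball_UNIV, blast\<close>)
    have v2: "value_fun M Z R1 Rm1 Dstar = (\<integral>\<omega>. Rm1 \<omega> \<partial>M) + (\<integral>\<omega>. (if Dstar (Z \<omega>) = 1 then 1 else 0) * dR \<omega> \<partial>M)"
      by (rule vf[OF _ IDsF]) (use Dval in auto)
    have perl: "(\<integral>\<omega>. ((if L \<omega> = l then 1 else 0) * (if D (Z \<omega>) = 1 then 1 else 0)) * dR \<omega> \<partial>M)
        \<le> (\<integral>\<omega>. ((if L \<omega> = l then 1 else 0) * (if Dstar (Z \<omega>) = 1 then 1 else 0)) * dR \<omega> \<partial>M)"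
      if l: "l \<in> Ls" for l
    proof -
      have fsN[measurable]: "fs l \<in> borel_measurable NZ" using fs_meas l by auto
      have fsF[measurable]: "(\<lambda>\<omega>. fs l (Z \<omega>)) \<in> borel_measurable F" by measurable
      define fl where "fl z = (if snd (snd z) = l then (if D z = 1 then 1 else 0) else fs l z)" for z
      have flN: "fl \<in> borel_measurable NZ" unfolding fl_def by measurable
      define E where "E = {\<omega>\<in>space M. D (Z \<omega>) = 1}"
      have EM[measurable]: "E \<in> sets M" unfolding E_def by measurable
      have "constr_l M Z S L l fl"
      proof -
        have "cprob M E {\<omega>\<in>space M. S \<omega> = 1 \<and> L \<omega> = l} = cprob M E {\<omega>\<in>space M. S \<omega> = 0 \<and> L \<omega> = l}"
          using cdpD[unfolded cdp_def, rule_format, of 1 0 l 1] l unfolding E_def by simp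
        then have "(\<integral>\<omega>. (if \<omega> \<in> E then 1 else 0) * (if L \<omega> = l then 1 else 0) * psi M S L l \<omega> \<partial>M) = 0"
          using constr_iff[OF prob S_meas L_meas S_vals _ _ EM, of l] pos_SL l by auto
        moreover have "(\<integral>\<omega>. (if fl (Z \<omega>) > 0 then 1 else 0) * (if L \<omega> = l then 1 else 0) * psi M S L l \<omega> \<partial>M)
          = (\<integral>\<omega>. (if \<omega> \<in> E then 1 else 0) * (if L \<omega> = l then 1 else 0) * psi M S L l \<omega> \<partial>M)"
          by (rule Bochner_Integration.integral_cong[OF refl]) (auto simp: fl_def E_def Z_def)
        ultimately show ?thesis unfolding constr_l_def by simp
      qed
      then have le: "obj_l M Z dR fl \<le> obj_l M Z dR (fs l)"
        using fs_opt l flN unfolding dR_def by auto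
      let ?IL = "\<lambda>\<omega>. if L \<omega> = l then 1 else 0::real"
      let ?ID = "\<lambda>\<omega>. if D (Z \<omega>) = 1 then 1 else 0::real"
      let ?IF = "\<lambda>\<omega>. if fs l (Z \<omega>) > 0 then 1 else 0::real"
      have i1: "integrable M (\<lambda>\<omega>. (?IL \<omega> * ?ID \<omega>) * dR \<omega>)" by (rule keyR) auto
      have i2: "integrable M (\<lambda>\<omega>. ?IF \<omega> * dR \<omega>)" by (rule keyR) auto
      have i3: "integrable M (\<lambda>\<omega>. (?IL \<omega> * ?IF \<omega>) * dR \<omega>)" by (rule keyR) auto
      have "obj_l M Z dR fl = (\<integral>\<omega>. (?IL \<omega> * ?ID \<omega>) * dR \<omega> + (?IF \<omega> * dR \<omega> - (?IL \<omega> * ?IF \<omega>) * dR \<omega>) \<partial>M)"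
        unfolding obj_l_def by (rule Bochner_Integration.integral_cong[OF refl]) (auto simp: fl_def Z_def)
      also have "\<dots> = (\<integral>\<omega>. (?IL \<omega> * ?ID \<omega>) * dR \<omega> \<partial>M) + ((\<integral>\<omega>. ?IF \<omega> * dR \<omega> \<partial>M) - (\<integral>\<omega>. (?IL \<omega> * ?IF \<omega>) * dR \<omega> \<partial>M))"
        using i1 i2 i3 by simp
      finally have o1: "obj_l M Z dR fl = \<dots>" .
      have o2: "obj_l M Z dR (fs l) = (\<integral>\<omega>. ?IF \<omega> * dR \<omega> \<partial>M)" unfolding obj_l_def ..
      have o3: "(\<integral>\<omega>. (?IL \<omega> * (if Dstar (Z \<omega>) = 1 then 1 else 0)) * dR \<omega> \<partial>M) = (\<integral>\<omega>. (?IL \<omega> * ?IF \<omega>) * dR \<omega> \<partial>M)"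
        by (rule Bochner_Integration.integral_cong[OF refl]) (auto simp: Dval)
      show ?thesis using le o1 o2 o3 by simp
    qed
    have "(\<integral>\<omega>. (if D (Z \<omega>) = 1 then 1 else 0) * dR \<omega> \<partial>M) \<le> (\<integral>\<omega>. (if Dstar (Z \<omega>) = 1 then 1 else 0) * dR \<omega> \<partial>M)"
      apply (subst splitL[OF IDF], simp)
      apply (subst splitL[OF IDsF], simp)
      by (rule sum_mono) (rule perl)
    then show ?thesis using v1 v2 by simp
  qed
  show ?thesis using DstarM Dval cdpS opt by auto
qed

end
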